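(* Let $n\ge 1$ and let $\vec s=(s_1,\dots,s_n)$, $\vec t=(t_1,\dots,t_n)$ be positive integers with $t_i<s_i$ for all $i$. Let $\mathcal{B}_{\vec s,\vec t}(n)$ be the number of distinct sets of balls that can be on the lawn after $n$ turns of the $(\vec s,\vec t)$-tennis ball process. Then $\mathcal{B}_{\vec s,\vec t}(n)=|\mathrm{SVT}((n+1)^2,\rho)|$, where $\rho$ is the density on the shape $(n+1,n+1)$ with first row densities $(\rho_{1,1},\rho_{1,2},\dots,\rho_{1,n+1})=(1,t_1,t_2,\dots,t_n)$ and second row densities $(\rho_{2,1},\dots,\rho_{2,n},\rho_{2,n+1})=(s_1-t_1,s_2-t_2,\dots,s_n-t_n,1)$.
   Context: The $(\vec s,\vec t)$-tennis ball process: balls are numbered $1,2,\dots,s_1+\dots+s_n$. There is a pool, initially empty. At turn $i$ ($1\le i\le n$), the balls numbered $s_1+\dots+s_{i-1}+1,\dots,s_1+\dots+s_i$ are added to the pool, and then any $t_i$ balls of the pool are removed and thrown onto the lawn. $\mathcal{B}_{\vec s,\vec t}(n)$ counts the possible sets of balls on the lawn after $n$ turns. A density on a shape $\lambda$ is an assignment of a nonnegative integer $\rho_{i,j}$ to every cell $(i,j)$ (row $i$, column $j$); let $N=\sum\rho_{i,j}$. A standard set-valued Young tableau of shape $\lambda$ and density $\rho$ assigns to each cell $(i,j)$ a set $S_{i,j}$ with $|S_{i,j}|=\rho_{i,j}$, the sets partitioning $[N]$, such that every element of $S_{i,j}$ is smaller than every element of $S_{i,j+1}$ and of $S_{i+1,j}$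 whenever those cells exist. $\mathrm{SVT}(\lambda,\rho)$ is the set of these tableaux. *)

theory Defs
  imports Main
begin

definition balls_upto :: "(nat \<Rightarrow> nat) \<Rightarrow> nat \<Rightarrow> nat" where
  "balls_upto s i = (\<Sum>k = 1..i. s k)"

(* Reachable (pool, lawn) configurations after i turns of the (s,t)-tennis ball process. *)
fun tennis_states :: "(nat \<Rightarrow> nat) \<Rightarrow> (nat \<Rightarrow> nat) \<Rightarrow> nat \<Rightarrow> (nat set \<times> nat set) set" where
  "tennis_states s t 0 = {({}, {})}"
| "tennis_states s t (Suc i) =
     {(P \<union> {balls_upto s i + 1 .. balls_upto s (Suc i)} - T, L \<union> T) | P L T.
        (P, L) \<in> tennis_states s t i \<and>
        T \<subseteq> P \<union> {balls_upto s i + 1 .. balls_upto s (Suc i)} \<and>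
        card T = t (Suc i)}"

definition tennis_count :: "(nat \<Rightarrow> nat) \<Rightarrow> (nat \<Rightarrow> nat) \<Rightarrow> nat \<Rightarrow> nat" where
  "tennis_count s t n = card (snd ` tennis_states s t n)"

(* Cells of a shape lambda given as the list of row lengths; rows and columns 1-indexed *)
definition cells :: "nat list \<Rightarrow> (nat \<times> nat) set" where
  "cells lam = {(i, j). 1 \<le> i \<and> i \<le> length lam \<and> 1 \<le> j \<and> j \<le> lam ! (i - 1)}"

definition SVT :: "nat list \<Rightarrow> (nat \<times> nat \<Rightarrow> nat) \<Rightarrow> (nat \<times> nat \<Rightarrow> nat set) set" where
  "SVT lam rho =
     (let N = (\<Sum>c \<in> cells lam. rho c) in
      {S. (\<forall>c. c \<notin> cells lam \<longrightarrow> S c = {}) \<and>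
          (\<forall>c \<in> cells lam. finite (S c) \<and> card (S c) = rho c) \<and>
          (\<forall>c \<in> cells lam. \<forall>d \<in> cells lam. c \<noteq> d \<longrightarrow> S c \<inter> S d = {}) \<and>
          (\<Union>c \<in> cells lam. S c) = {1..N} \<and>
          (\<forall>i j. (i, j) \<in> cells lam \<and> (i, Suc j) \<in> cells lam \<longrightarrow>
                 (\<forall>x \<in> S (i, j). \<forall>y \<in> S (i, Suc j). x < y)) \<and>
          (\<forall>i j. (i, j) \<in> cells lam \<and> (Suc i, j) \<in> cells lam \<longrightarrow>
                 (\<forall>x \<in> S (i, j). \<forall>y \<in> S (Suc i, j). x < y))})"

end

theory Submission
  imports Defs
begin
lemma balls_upto_0[simp]: "balls_upto s 0 = 0" by (simp add: balls_upto_def)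
lemma balls_upto_Suc: "balls_upto s (Suc i) = balls_upto s i + s (Suc i)"
  by (simp add: balls_upto_def)
lemma balls_upto_mono: "i \<le> j \<Longrightarrow> balls_upto s i \<le> balls_upto s j"
  by (induction j) (auto simp: balls_upto_Suc le_Suc_eq)


lemma ss_less: "sorted_wrt (<) xs \<Longrightarrow> i < j \<Longrightarrow> j < length xs \<Longrightarrow> (xs ! i :: nat) < xs ! j"
  by (rule sorted_wrt_nth_less)

lemma ss_less_iff: "sorted_wrt (<) xs \<Longrightarrow> i < length xs \<Longrightarrow> j < length xs \<Longrightarrow> ((xs ! i :: nat) < xs ! j) = (i < j)"
  by (metis less_asym linorder_neqE_nat sorted_wrt_nth_less)

lemma slos: assumes "finite A"
  shows "sorted_wrt (<) (sorted_list_of_set (A::nat set))" "set (sorted_list_of_set A) = A"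
    "length (sorted_list_of_set A) = card A" "distinct (sorted_list_of_set A)"
  using assms by auto

lemma index_lemma:
  assumes "finite A" "(x::nat) \<in> A"
  shows "card {y\<in>A. y < x} < card A" "sorted_list_of_set A ! card {y\<in>A. y < x} = x"
proof -
  let ?xs = "sorted_list_of_set A"
  have ss: "sorted_wrt (<) ?xs" and st: "set ?xs = A" and len: "length ?xs = card A"
    and d: "distinct ?xs" using slos[OF assms(1)] by auto
  obtain i where i: "i < length ?xs" "?xs ! i = x" using assms(2) st by (metis in_set_conv_nth)
  have eq: "{y\<in>A. y < x} = (\<lambda>m. ?xs ! m) ` {..<i}"
  proof
    show "{y\<in>A. y < x} \<subseteq> (\<lambda>m. ?xs ! m) ` {..<i}"
    proof
      fix y assume y: "y \<in> {y\<in>A. y < x}"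
      then obtain m where m: "m < length ?xs" "?xs ! m = y" using st by (metis (mono_tags, lifting) in_set_conv_nth mem_Collect_eq)
      then have "m < i" using ss_less_iff[OF ss m(1) i(1)] y i by auto
      then show "y \<in> (\<lambda>m. ?xs ! m) ` {..<i}" using m by auto
    qed
    show "(\<lambda>m. ?xs ! m) ` {..<i} \<subseteq> {y\<in>A. y < x}"
      using ss_less[OF ss _ i(1)] i st nth_mem by fastforce
  qed
  have "card {y\<in>A. y < x} = i" unfolding eq
    by (subst card_image) (use d i in \<open>auto simp: inj_on_def nth_eq_iff_index_eq\<close>)
  then show "card {y\<in>A. y < x} < card A" "?xs ! card {y\<in>A. y < x} = x" using i len by auto
qed

lemma rank_lemma:
  assumes "finite A" "a < card (A::nat set)"
  shows "(sorted_list_of_set A ! a \<le> m) = (a < card {y\<in>A. y \<le> m})"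
proof -
  let ?xs = "sorted_list_of_set A"
  have ss: "sorted_wrt (<) ?xs" and st: "set ?xs = A" and len: "length ?xs = card A"
    and d: "distinct ?xs" using slos[OF assms(1)] by auto
  have inj: "inj_on (\<lambda>m. ?xs ! m) {..<length ?xs}" using d by (auto simp: inj_on_def nth_eq_iff_index_eq)
  show ?thesis
  proof
    assume h: "?xs ! a \<le> m"
    have sub: "(\<lambda>i. ?xs ! i) ` {..a} \<subseteq> {y\<in>A. y \<le> m}"
    proof
      fix y assume "y \<in> (\<lambda>i. ?xs ! i) ` {..a}"
      then obtain i where "i \<le> a" "y = ?xs ! i" by auto
      then show "y \<in> {y\<in>A. y \<le> m}" using h ss_less[OF ss, of i a] assms len st
        by (metis (mono_tags, lifting) dual_order.strict_trans1 le_less_trans mem_Collect_eq nat_less_le nth_mem order.refl)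
    qed
    have "card ((\<lambda>i. ?xs ! i) ` {..a}) = Suc a"
      by (subst card_image) (use inj assms len in \<open>auto intro: inj_on_subset\<close>)
    moreover have "card ((\<lambda>i. ?xs ! i) ` {..a}) \<le> card {y\<in>A. y \<le> m}"
      using sub assms(1) by (intro card_mono) auto
    ultimately show "a < card {y\<in>A. y \<le> m}" by simp
  next
    assume h: "a < card {y\<in>A. y \<le> m}"
    show "?xs ! a \<le> m"
    proof (rule ccontr)
      assume "\<not> ?xs ! a \<le> m"
      then have gt: "m < ?xs ! a" by simp
      have sub: "{y\<in>A. y \<le> m} \<subseteq> (\<lambda>i. ?xs ! i) ` {..<a}"
      proof
        fix y assume y: "y \<in> {y\<in>A. y \<le> m}"
        then obtain i where i: "i < length ?xs" "?xs ! i = y" using st by (metis (mono_tags, lifting) in_set_conv_nth mem_Collect_eq)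
        have "i < a" using ss_less_iff[OF ss i(1), of a] assms len gt y i by auto
        then show "y \<in> (\<lambda>i. ?xs ! i) ` {..<a}" using i by auto
      qed
      have "card {y\<in>A. y \<le> m} \<le> card ((\<lambda>i. ?xs ! i) ` {..<a})" using sub by (intro card_mono) auto
      also have "\<dots> \<le> a" using card_image_le[of "{..<a}" "\<lambda>i. ?xs ! i"] by simp
      finally show False using h by simp
    qed
  qed
qed

definition blk :: "nat list \<Rightarrow> nat \<Rightarrow> nat \<Rightarrow> nat set" where
  "blk xs a b = (\<lambda>m. xs ! m) ` {a..<b}"

lemma blk_card: "distinct xs \<Longrightarrow> b \<le> length xs \<Longrightarrow> card (blk xs a b) = b - a"
  unfolding blk_def
  by (subst card_image) (auto simp: inj_on_def nth_eq_iff_index_eq)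

lemma blk_sub: "b \<le> length xs \<Longrightarrow> blk xs a b \<subseteq> set xs"
  unfolding blk_def by auto

lemma blk_less: "sorted_wrt (<) xs \<Longrightarrow> x \<in> blk xs a b \<Longrightarrow> y \<in> blk xs c d \<Longrightarrow> b \<le> c \<Longrightarrow> d \<le> length xs \<Longrightarrow> x < y"
  unfolding blk_def using ss_less by fastforce

lemma blk_all: "blk xs 0 (length xs) = set xs"
  unfolding blk_def by (auto simp: in_set_conv_nth atLeast0LessThan)

lemma interval_union:
  assumes "\<And>k. k < n \<Longrightarrow> (f k :: nat) \<le> f (Suc k)"
  shows "(\<Union>k\<in>{1..n}. {f (k-1)..<f k}) = {f 0..<f n}"
  using assms
proof (induction n)
  case 0 then show ?case by simp
next
  case (Suc n)
  have m: "f 0 \<le> f n" using Suc.prems by (induction n) (auto intro: order_trans)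
  have "{1..Suc n} = insert (Suc n) {1..n}" by auto
  then have "(\<Union>k\<in>{1..Suc n}. {f (k-1)..<f k}) = {f n..<f (Suc n)} \<union> {f 0..<f n}"
    using Suc by auto
  also have "\<dots> = {f 0..<f (Suc n)}" using m Suc.prems[of n] by auto
  finally show ?case .
qed

lemma blk_union:
  assumes "\<And>k. k < n \<Longrightarrow> (f k :: nat) \<le> f (Suc k)"
  shows "(\<Union>k\<in>{1..n}. blk xs (f (k-1)) (f k)) = blk xs (f 0) (f n)"
  using interval_union[of n f, OF assms] unfolding blk_def by (simp add: image_UN[symmetric])

lemma card_UN_blocks:
  assumes "\<And>k. k \<in> {1..n} \<Longrightarrow> finite (B k)"
    and "\<And>k k' x y. k \<in> {1..n} \<Longrightarrow> k' \<in> {1..n} \<Longrightarrow> k < k' \<Longrightarrow> x \<in> B k \<Longrightarrow> y \<in> B k' \<Longrightarrow> (x::nat) < y"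
  shows "card (\<Union>k\<in>{1..n}. B k) = balls_upto (\<lambda>k. card (B k)) n"
  using assms
proof (induction n)
  case 0 then show ?case by (simp add: balls_upto_def)
next
  case (Suc n)
  have e: "(\<Union>k\<in>{1..Suc n}. B k) = (\<Union>k\<in>{1..n}. B k) \<union> B (Suc n)"
  proof -
    have "{1..Suc n} = insert (Suc n) {1..n}" by auto
    then show ?thesis by auto
  qed
  have d: "(\<Union>k\<in>{1..n}. B k) \<inter> B (Suc n) = {}"
    using Suc.prems(2)[of _ "Suc n"] by fastforce
  have "card (\<Union>k\<in>{1..Suc n}. B k) = card (\<Union>k\<in>{1..n}. B k) + card (B (Suc n))"
    unfolding e by (rule card_Un_disjoint) (use Suc.prems d in auto)
  also have "card (\<Union>k\<in>{1..n}. B k) = balls_upto (\<lambda>k. card (B k)) n"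
  proof (rule Suc.IH)
    fix k assume "k \<in> {1..n}" then show "finite (B k)" using Suc.prems(1) by auto
  next
    fix k k' x y assume "k \<in> {1..n}" "k' \<in> {1..n}" "k<k'" "x\<in>B k" "y\<in>B k'"
    then show "x<y" using Suc.prems(2)[of k k' x y] by auto
  qed
  finally show ?case by (simp add: balls_upto_def)
qed

lemma blocks_G:
  assumes fin: "\<And>k. k \<in> {1..n} \<Longrightarrow> finite (B k)"
    and ord: "\<And>k k' x y. k \<in> {1..n} \<Longrightarrow> k' \<in> {1..n} \<Longrightarrow> k < k' \<Longrightarrow> x \<in> B k \<Longrightarrow> y \<in> B k' \<Longrightarrow> (x::nat) < y"
    and j: "j \<in> {1..n}"
  shows "B j = blk (sorted_list_of_set (\<Union>k\<in>{1..n}. B k))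
                 (balls_upto (\<lambda>k. card (B k)) (j-1)) (balls_upto (\<lambda>k. card (B k)) j)"
proof -
  define A where "A = (\<Union>k\<in>{1..n}. B k)"
  define f where "f = balls_upto (\<lambda>k. card (B k))"
  have fA: "finite A" using fin by (auto simp: A_def)
  have cA: "card A = f n" unfolding A_def f_def by (rule card_UN_blocks) (use fin ord in auto)
  have fj: "f j = f (j-1) + card (B j)" using j by (cases j) (auto simp: f_def balls_upto_Suc)
  have fjn: "f j \<le> f n" unfolding f_def by (rule balls_upto_mono) (use j in auto)
  let ?xs = "sorted_list_of_set A"
  have sub: "B j \<subseteq> blk ?xs (f (j-1)) (f j)"
  proof
    fix x assume x: "x \<in> B j"
    have xA: "x \<in> A" using x j by (auto simp: A_def)
    have split: "{y\<in>A. y < x} = (\<Union>k\<in>{1..j-1}. B k) \<union> {y\<in>B j. y < x}"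
    proof
      show "{y\<in>A. y < x} \<subseteq> (\<Union>k\<in>{1..j-1}. B k) \<union> {y\<in>B j. y < x}"
      proof
        fix y assume y: "y \<in> {y\<in>A. y < x}"
        then obtain k where k: "k \<in> {1..n}" "y \<in> B k" by (auto simp: A_def)
        have "\<not> j < k" using ord[OF j k(1) _ x k(2)] y by auto
        then show "y \<in> (\<Union>k\<in>{1..j-1}. B k) \<union> {y\<in>B j. y < x}"
          using k y by (cases "k = j") auto
      qed
      show "(\<Union>k\<in>{1..j-1}. B k) \<union> {y\<in>B j. y < x} \<subseteq> {y\<in>A. y < x}"
      proof
        fix y assume y: "y \<in> (\<Union>k\<in>{1..j-1}. B k) \<union> {y\<in>B j. y < x}"
        show "y \<in> {y\<in>A. y < x}"
        proof (cases "y \<in> {y\<in>B j. y < x}")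
          case True then show ?thesis using y j by (auto simp: A_def)
        next
          case False
          then obtain k where k: "k \<in> {1..j-1}" "y \<in> B k" using y by auto
          have kn: "k \<in> {1..n}" "k < j" using k j by auto
          then show ?thesis using ord[OF kn(1) j kn(2) k(2) x] k(2) by (auto simp: A_def)
        qed
      qed
    qed
    have c1: "card (\<Union>k\<in>{1..j-1}. B k) = f (j-1)"
      unfolding f_def
    proof (rule card_UN_blocks)
      fix k assume "k \<in> {1..j-1}" then show "finite (B k)" using fin j by auto
    next
      fix k k' x y assume "k \<in> {1..j-1}" "k' \<in> {1..j-1}" "k<k'" "x\<in>B k" "y\<in>B k'"
      then show "x<y" using ord[of k k' x y] j by auto
    qed
    have disj: "(\<Union>k\<in>{1..j-1}. B k) \<inter> {y\<in>B j. y < x} = {}"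
      using ord[OF _ j] j by fastforce
    have c: "card {y\<in>A. y < x} = f (j-1) + card {y\<in>B j. y < x}"
      unfolding split c1[symmetric]
      by (rule card_Un_disjoint) (use fin j disj in auto)
    have c2: "card {y\<in>B j. y < x} < card (B j)"
      by (rule psubset_card_mono) (use fin j x in auto)
    have "?xs ! card {y\<in>A. y < x} = x" by (rule index_lemma(2)[OF fA xA])
    then show "x \<in> blk ?xs (f (j-1)) (f j)"
      unfolding blk_def using c c2 fj by (auto intro!: image_eqI[of _ _ "card {y\<in>A. y < x}"])
  qed
  have "card (blk ?xs (f (j-1)) (f j)) = card (B j)"
    by (subst blk_card) (use fA cA fjn fj in auto)
  then have "B j = blk ?xs (f (j-1)) (f j)"
    using sub by (intro card_subset_eq) (auto simp: blk_def)
  then show ?thesis by (simp add: A_def f_def)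
qed


definition good :: "(nat \<Rightarrow> nat) \<Rightarrow> (nat \<Rightarrow> nat) \<Rightarrow> nat \<Rightarrow> nat set \<Rightarrow> bool" where
  "good s t n L \<longleftrightarrow> L \<subseteq> {1..balls_upto s n} \<and> card L = balls_upto t n \<and>
     (\<forall>k\<in>{1..n}. balls_upto t k \<le> card (L \<inter> {1..balls_upto s k}))"

lemma balls_upto_cong: "(\<And>k. k \<in> {1..m} \<Longrightarrow> f k = g k) \<Longrightarrow> balls_upto f m = balls_upto g m"
  unfolding balls_upto_def by (rule sum.cong) auto

lemma cells_eq: "cells [m + 1, m + 1] = {(i, j). (i = 1 \<or> i = 2) \<and> 1 \<le> j \<and> j \<le> m + 1}"
  unfolding cells_def by (auto simp: nth_Cons split: nat.splits)

locale TB =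
  fixes s t :: "nat \<Rightarrow> nat" and n :: nat
  assumes n1: "n \<ge> 1" and st: "\<forall>i \<in> {1..n}. 0 < t i \<and> t i < s i"
begin

abbreviation "T \<equiv> balls_upto t"
abbreviation "U \<equiv> balls_upto (\<lambda>i. s i - t i)"
abbreviation "Sn \<equiv> balls_upto s n"

definition rho :: "nat \<times> nat \<Rightarrow> nat" where
  "rho = (\<lambda>(i, j). if i = 1 then (if j = 1 then 1 else t (j - 1))
                     else (if j = n + 1 then 1 else s j - t j))"

lemma S_eq: "k \<le> n \<Longrightarrow> balls_upto s k = T k + U k"
proof (induction k)
  case 0 then show ?case by simp
next
  case (Suc k)
  have "t (Suc k) < s (Suc k)" using st Suc.prems by auto
  then show ?case using Suc by (auto simp: balls_upto_Suc)
qed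

lemma T_step: "k \<in> {1..n} \<Longrightarrow> T k = T (k-1) + t k"
  by (cases k) (auto simp: balls_upto_Suc)
lemma U_step: "k \<in> {1..n} \<Longrightarrow> U k = U (k-1) + (s k - t k)"
  by (cases k) (auto simp: balls_upto_Suc)
lemma T_lt: "k \<in> {1..n} \<Longrightarrow> T (k-1) < T k" using T_step st by fastforce
lemma U_lt: "k \<in> {1..n} \<Longrightarrow> U (k-1) < U k" using U_step st by fastforce

lemma sum_row1: "(\<Sum>j\<in>{1..Suc m}. (if j = 1 then 1 else t (j - 1))) = 1 + T m"
proof (induction m)
  case 0 then show ?case by simp
next
  case (Suc m)
  have "{1..Suc (Suc m)} = insert (Suc (Suc m)) {1..Suc m}" by auto
  then show ?case using Suc by (simp add: balls_upto_Suc)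
qed

lemma sum_row2: "(\<Sum>j\<in>{1..Suc m}. (if j = Suc m then 1 else s j - t j)) = U m + 1"
proof -
  have "{1..Suc m} = insert (Suc m) {1..m}" by auto
  then have "(\<Sum>j\<in>{1..Suc m}. (if j = Suc m then 1 else s j - t j))
      = 1 + (\<Sum>j\<in>{1..m}. (if j = Suc m then 1 else s j - t j))" by simp
  also have "(\<Sum>j\<in>{1..m}. (if j = Suc m then 1 else s j - t j)) = U m"
    unfolding balls_upto_def by (rule sum.cong) auto
  finally show ?thesis by simp
qed

lemma cells_n: "cells [n + 1, n + 1] = {1, 2} \<times> {1..n+1}"
  unfolding cells_eq by auto

lemma Nsum: "(\<Sum>c \<in> cells [n + 1, n + 1]. rho c) = Sn + 2"
proof -
  have "(\<Sum>c \<in> cells [n + 1, n + 1]. rho c) = (\<Sum>i\<in>{1,2::nat}. \<Sum>j\<in>{1..n+1}. rho (i, j))"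
  proof -
    have "(\<Sum>c \<in> cells [n + 1, n + 1]. rho c) = (\<Sum>(i,j)\<in>{1,2::nat}\<times>{1..n+1}. rho (i,j))"
      unfolding cells_n by simp
    also have "\<dots> = (\<Sum>i\<in>{1,2::nat}. \<Sum>j\<in>{1..n+1}. rho (i, j))"
      by (rule sum.cartesian_product[symmetric])
    finally show ?thesis .
  qed
  also have "\<dots> = (\<Sum>j\<in>{1..Suc n}. (if j = 1 then 1 else t (j - 1))) +
                   (\<Sum>j\<in>{1..Suc n}. (if j = Suc n then 1 else s j - t j))"
    by (simp add: rho_def)
  also have "\<dots> = Sn + 2" unfolding sum_row1 sum_row2 using S_eq[of n] by simp
  finally show ?thesis .
qed

definition psi :: "nat set \<Rightarrow> nat \<times> nat \<Rightarrow> nat set" where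
  "psi L = (\<lambda>(i, j). if i = 1 \<and> j = 1 then {1}
     else if i = 1 \<and> 2 \<le> j \<and> j \<le> n + 1 then Suc ` blk (sorted_list_of_set L) (T (j-2)) (T (j-1))
     else if i = 2 \<and> 1 \<le> j \<and> j \<le> n then Suc ` blk (sorted_list_of_set ({1..Sn} - L)) (U (j-1)) (U j)
     else if i = 2 \<and> j = n + 1 then {Sn + 2} else {})"

definition phi :: "(nat \<times> nat \<Rightarrow> nat set) \<Rightarrow> nat set" where
  "phi S = (\<lambda>x. x - 1) ` (\<Union>j\<in>{2..n+1}. S (1, j))"

end

lemma discrete_ivt:
  fixes f :: "nat \<Rightarrow> nat"
  assumes "f 0 = 0" "\<And>x. f (Suc x) \<le> f x + 1" "v \<le> f b"
  shows "\<exists>a\<le>b. f a = v"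
  using assms(3)
proof (induction b)
  case 0 then show ?case using assms(1) by auto
next
  case (Suc b)
  show ?case
  proof (cases "v \<le> f b")
    case True then show ?thesis using Suc.IH by (meson le_Suc_eq)
  next
    case False then have "v = f (Suc b)" using Suc.prems assms(2)[of b] by linarith
    then show ?thesis by blast
  qed
qed

lemma card_Int_Suc: "card (L \<inter> {1..Suc a}) \<le> card (L \<inter> {1..a}) + 1"
proof -
  have "L \<inter> {1..Suc a} \<subseteq> insert (Suc a) (L \<inter> {1..a})" by auto
  then have "card (L \<inter> {1..Suc a}) \<le> card (insert (Suc a) (L \<inter> {1..a}))"
    by (intro card_mono) auto
  also have "\<dots> \<le> card (L \<inter> {1..a}) + 1" by (simp add: card_insert_if)
  finally show ?thesis .
qed

lemma states_char:
  "tennis_states s t i = {({1..balls_upto s i} - L, L) | L. good s t i L}"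
proof (induction i)
  case 0
  show ?case by (auto simp: good_def)
next
  case (Suc i)
  let ?S = "balls_upto s i" and ?S' = "balls_upto s (Suc i)"
  have SS: "?S \<le> ?S'" by (simp add: balls_upto_Suc)
  show ?case
  proof (rule set_eqI, rule iffI)
    fix x assume "x \<in> tennis_states s t (Suc i)"
    then obtain P L T where x: "x = (P \<union> {?S + 1 .. ?S'} - T, L \<union> T)"
      and PL: "(P, L) \<in> tennis_states s t i" and T: "T \<subseteq> P \<union> {?S + 1 .. ?S'}"
      and cT: "card T = t (Suc i)" by auto
    from PL Suc.IH have P: "P = {1..?S} - L" and g: "good s t i L" by auto
    have LS: "L \<subseteq> {1..?S}" and cL: "card L = balls_upto t i" using g by (auto simp: good_def)
    have TL: "T \<inter> L = {}" using T P LS by fastforce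
    have fT: "finite T" using T P finite_subset by blast
    have fL: "finite L" using LS finite_subset by blast
    have newP: "P \<union> {?S + 1 .. ?S'} - T = {1..?S'} - (L \<union> T)" using P LS SS by auto
    have "good s t (Suc i) (L \<union> T)"
      unfolding good_def
    proof (intro conjI ballI)
      show "L \<union> T \<subseteq> {1..?S'}" using LS T P SS by auto
      show "card (L \<union> T) = balls_upto t (Suc i)"
        using card_Un_disjoint[OF fL fT] TL cL cT by (auto simp: balls_upto_Suc Int_commute)
      fix k assume k: "k \<in> {1..Suc i}"
      show "balls_upto t k \<le> card ((L \<union> T) \<inter> {1..balls_upto s k})"
      proof (cases "k = Suc i")
        case True
        have "(L \<union> T) \<inter> {1..balls_upto s k} = L \<union> T" using True LS T P SS by auto
        then show ?thesis using True card_Un_disjoint[OF fL fT] TL cL cT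
          by (auto simp: balls_upto_Suc Int_commute)
      next
        case False
        then have "k \<in> {1..i}" using k by auto
        then have "balls_upto t k \<le> card (L \<inter> {1..balls_upto s k})" using g by (auto simp: good_def)
        also have "\<dots> \<le> card ((L \<union> T) \<inter> {1..balls_upto s k})"
          by (intro card_mono) (use fL fT in auto)
        finally show ?thesis .
      qed
    qed
    then show "x \<in> {({1..?S'} - L, L) | L. good s t (Suc i) L}" using x newP by auto
  next
    fix x assume "x \<in> {({1..?S'} - L, L) | L. good s t (Suc i) L}"
    then obtain L where x: "x = ({1..?S'} - L, L)" and g: "good s t (Suc i) L" by auto
    have LS: "L \<subseteq> {1..?S'}" and cL: "card L = balls_upto t (Suc i)"
      and gk: "\<And>k. k \<in> {1..Suc i} \<Longrightarrow> balls_upto t k \<le> card (L \<inter> {1..balls_upto s k})"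
      using g by (auto simp: good_def)
    have fL: "finite L" using LS finite_subset by blast
    have "balls_upto t i \<le> card (L \<inter> {1..?S})"
      using gk[of i] by (cases i) auto
    then obtain a where a: "a \<le> ?S" "card (L \<inter> {1..a}) = balls_upto t i"
      using discrete_ivt[of "\<lambda>a. card (L \<inter> {1..a})"] card_Int_Suc by force
    define L' where "L' = L \<inter> {1..a}"
    define T where "T = L - L'"
    have L'S: "L' \<subseteq> {1..?S}" using a by (auto simp: L'_def)
    have gL': "good s t i L'"
      unfolding good_def
    proof (intro conjI ballI)
      show "L' \<subseteq> {1..?S}" by (rule L'S)
      show "card L' = balls_upto t i" using a by (simp add: L'_def)
      fix k assume k: "k \<in> {1..i}"
      show "balls_upto t k \<le> card (L' \<inter> {1..balls_upto s k})"
      proof (cases "a \<le> balls_upto s k")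
        case True
        then have "L' \<inter> {1..balls_upto s k} = L'" by (auto simp: L'_def)
        then show ?thesis using a balls_upto_mono[of k i t] k by (simp add: L'_def)
      next
        case False
        then have "L' \<inter> {1..balls_upto s k} = L \<inter> {1..balls_upto s k}" by (auto simp: L'_def)
        then show ?thesis using gk[of k] k by auto
      qed
    qed
    have P: "({1..?S} - L', L) \<in> tennis_states s t i \<or> True" by simp
    have mem: "({1..?S} - L', L') \<in> tennis_states s t i" using Suc.IH gL' by auto
    have TS: "T \<subseteq> ({1..?S} - L') \<union> {?S + 1 .. ?S'}" using LS by (auto simp: T_def L'_def)
    have cT: "card T = t (Suc i)"
    proof -
      have "card T = card L - card L'" unfolding T_def
        by (rule card_Diff_subset) (use fL in \<open>auto simp: L'_def\<close>)
      then show ?thesis using cL a by (simp add: L'_def balls_upto_Suc)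
    qed
    have e1: "({1..?S} - L') \<union> {?S + 1 .. ?S'} - T = {1..?S'} - L" using LS L'S SS
      by (auto simp: T_def L'_def)
    have e2: "L' \<union> T = L" by (auto simp: T_def L'_def)
    show "x \<in> tennis_states s t (Suc i)"
      unfolding x tennis_states.simps
      apply (rule CollectI)
      apply (rule exI[of _ "{1..?S} - L'"], rule exI[of _ L'], rule exI[of _ T])
      using mem TS cT e1 e2 by auto
  qed
qed

lemma tennis_count_good: "tennis_count s t n = card {L. good s t n L}"
proof -
  have "snd ` tennis_states s t n = {L. good s t n L}"
    unfolding states_char by force
  then show ?thesis by (simp add: tennis_count_def)
qed


context TB begin

lemma T_mono: "i \<le> j \<Longrightarrow> T i \<le> T j" by (rule balls_upto_mono)
lemma U_mono: "i \<le> j \<Longrightarrow> U i \<le> U j" by (rule balls_upto_mono)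

lemma psi_props:
  assumes g: "good s t n L"
  defines "xs \<equiv> sorted_list_of_set L" and "ys \<equiv> sorted_list_of_set ({1..Sn} - L)"
  shows "psi L \<in> SVT [n + 1, n + 1] rho" and "(\<Union>j\<in>{2..n+1}. psi L (1, j)) = Suc ` L"
proof -
  have LS: "L \<subseteq> {1..Sn}" and cL: "card L = T n"
    and gk: "\<And>k. k \<in> {1..n} \<Longrightarrow> T k \<le> card (L \<inter> {1..balls_upto s k})"
    using g by (auto simp: good_def)
  define C where "C = {1..Sn} - L"
  have fL: "finite L" using LS finite_subset by blast
  have fC: "finite C" by (simp add: C_def)
  have cC: "card C = U n" unfolding C_def using card_Diff_subset[OF fL LS] cL S_eq[of n] by simp
  have ssx: "sorted_wrt (<) xs" and sx: "set xs = L" and lx: "length xs = T n" and dx: "distinct xs"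
    using slos[OF fL] cL by (auto simp: xs_def)
  have ssy: "sorted_wrt (<) ys" and sy: "set ys = C" and ly: "length ys = U n" and dy: "distinct ys"
    using slos[OF fC] cC by (auto simp: ys_def C_def)
  have psi1: "psi L (1, j) = Suc ` blk xs (T (j-2)) (T (j-1))" if "2 \<le> j" "j \<le> n + 1" for j
    using that by (simp add: psi_def xs_def)
  have psi2: "psi L (2, j) = Suc ` blk ys (U (j-1)) (U j)" if "1 \<le> j" "j \<le> n" for j
    using that by (simp add: psi_def ys_def C_def)
  have psi11: "psi L (1, 1) = {1}" by (simp add: psi_def)
  have psi2n: "psi L (2, n+1) = {Sn + 2}" by (simp add: psi_def)
  have xsL: "blk xs a b \<subseteq> L" if "b \<le> T n" for a b using blk_sub[of b xs a] that lx sx by auto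
  have ysC: "blk ys a b \<subseteq> C" if "b \<le> U n" for a b using blk_sub[of b ys a] that ly sy by auto
  have Lr: "\<forall>x\<in>L. 1 \<le> x \<and> x \<le> Sn" using LS by auto
  have Cr: "\<forall>x\<in>C. 1 \<le> x \<and> x \<le> Sn \<and> x \<notin> L" by (auto simp: C_def)
  have psi1L: "psi L (1, j) \<subseteq> Suc ` L" if "2 \<le> j" "j \<le> n + 1" for j
    using psi1[OF that] xsL[of "T (j-1)" "T (j-2)"] T_mono[of "j-1" n] that by auto
  have psi2C: "psi L (2, j) \<subseteq> Suc ` C" if "1 \<le> j" "j \<le> n" for j
    using psi2[OF that] ysC[of "U j" "U (j-1)"] U_mono[of j n] that by auto
  have row1: "psi L (1, j) \<subseteq> insert 1 (Suc ` L)" if "1 \<le> j" "j \<le> n + 1" for j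
  proof (cases "j = 1")
    case True then show ?thesis using psi11 by auto
  next
    case False
    then have "psi L (1, j) = Suc ` blk xs (T (j-2)) (T (j-1))" using that psi1 by auto
    moreover have "blk xs (T (j-2)) (T (j-1)) \<subseteq> L" using xsL T_mono that by auto
    ultimately show ?thesis by auto
  qed
  have row2: "psi L (2, j) \<subseteq> insert (Sn + 2) (Suc ` C)" if "1 \<le> j" "j \<le> n + 1" for j
  proof (cases "j = n + 1")
    case True then show ?thesis using psi2n by auto
  next
    case False
    then have "psi L (2, j) = Suc ` blk ys (U (j-1)) (U j)" using that psi2 by auto
    moreover have "blk ys (U (j-1)) (U j) \<subseteq> C" using ysC U_mono that False by auto
    ultimately show ?thesis by auto
  qed
  have R1: "x < y" if h: "1 \<le> j" "j < j'" "j' \<le> n + 1" "x \<in> psi L (1, j)" "y \<in> psi L (1, j')" for j j' x y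
  proof (cases "j = 1")
    case True
    then have "x = 1" using h psi11 by auto
    moreover have "y \<in> Suc ` L" using psi1L[of j'] h True by auto
    ultimately show ?thesis using Lr by auto
  next
    case False
    obtain a where a: "a \<in> blk xs (T (j-2)) (T (j-1))" "x = Suc a" using psi1[of j] h False by auto
    obtain b where b: "b \<in> blk xs (T (j'-2)) (T (j'-1))" "y = Suc b" using psi1[of j'] h False by auto
    have "a < b" by (rule blk_less[OF ssx a(1) b(1)]) (use h False lx T_mono in auto)
    then show ?thesis using a b by simp
  qed
  have R2: "x < y" if h: "1 \<le> j" "j < j'" "j' \<le> n + 1" "x \<in> psi L (2, j)" "y \<in> psi L (2, j')" for j j' x y
  proof (cases "j' = n + 1")
    case True
    then have "y = Sn + 2" using h psi2n by auto
    moreover have "x \<in> Suc ` C" using psi2C[of j] h True by auto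
    ultimately show ?thesis using Cr by auto
  next
    case False
    obtain a where a: "a \<in> blk ys (U (j-1)) (U j)" "x = Suc a" using psi2[of j] h False by auto
    obtain b where b: "b \<in> blk ys (U (j'-1)) (U j')" "y = Suc b" using psi2[of j'] h False by auto
    have "a < b" by (rule blk_less[OF ssy a(1) b(1)]) (use h False ly U_mono in auto)
    then show ?thesis using a b by simp
  qed
  have Col: "x < y" if h: "1 \<le> j" "j \<le> n + 1" "x \<in> psi L (1, j)" "y \<in> psi L (2, j)" for j x y
  proof -
    consider "j = 1" | "j = n + 1" | "2 \<le> j" "j \<le> n" using h by linarith
    then show ?thesis
    proof cases
      case 1
      then have "x = 1" using h psi11 by auto
      moreover have "y \<in> Suc ` C" using psi2C[of j] h 1 n1 by auto
      ultimately show ?thesis using Cr by auto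
    next
      case 2
      then have "y = Sn + 2" using h psi2n by auto
      moreover have "x \<in> Suc ` L" using psi1L[of j] h 2 n1 by auto
      ultimately show ?thesis using Lr by auto
    next
      case 3
      define k where "k = j - 1"
      have k: "k \<in> {1..n}" "k < n" using 3 by (auto simp: k_def)
      obtain a where a: "a \<in> {T (k-1)..<T k}" "x = Suc (xs ! a)"
        using psi1[of j] h 3 by (auto simp: blk_def k_def numeral_2_eq_2)
      obtain b where b: "b \<in> {U k..<U (k+1)}" "y = Suc (ys ! b)"
        using psi2[of j] h 3 by (auto simp: blk_def k_def)
      have Sk: "balls_upto s k = T k + U k" using S_eq k by auto
      have aL: "a < card L" using a(1) T_mono[of k n] k cL by auto
      have c1: "card {y\<in>L. y \<le> balls_upto s k} = card (L \<inter> {1..balls_upto s k})"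
        using Lr by (intro arg_cong[where f=card]) auto
      have "xs ! a \<le> balls_upto s k"
        using rank_lemma[OF fL aL, of "balls_upto s k"] c1 gk[OF k(1)] a(1) by (auto simp: xs_def)
      moreover have "\<not> ys ! b \<le> balls_upto s k"
      proof -
        have bC: "b < card C" using b(1) U_mono[of "k+1" n] k cC by auto
        have e: "{y\<in>C. y \<le> balls_upto s k} = {1..balls_upto s k} - L \<inter> {1..balls_upto s k}"
          using balls_upto_mono[of k n s] k by (auto simp: C_def)
        have "card {y\<in>C. y \<le> balls_upto s k} = balls_upto s k - card (L \<inter> {1..balls_upto s k})"
          unfolding e by (subst card_Diff_subset) auto
        then have "card {y\<in>C. y \<le> balls_upto s k} \<le> U k" using gk[OF k(1)] Sk by linarith
        then show ?thesis using rank_lemma[OF fC bC, of "balls_upto s k"] b(1)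
          by (auto simp: ys_def C_def)
      qed
      ultimately show ?thesis using a b by simp
    qed
  qed
  have U1: "(\<Union>j\<in>{2..n+1}. psi L (1, j)) = Suc ` L"
  proof -
    have "(\<Union>j\<in>{2..n+1}. psi L (1, j)) = (\<Union>k\<in>{1..n}. psi L (1, Suc k))"
    proof -
      have e: "{2..n+1} = Suc ` {1..n}" by (simp add: image_Suc_atLeastAtMost)
      show ?thesis unfolding e image_image by (rule refl)
    qed
    also have "\<dots> = (\<Union>k\<in>{1..n}. Suc ` blk xs (T (k-1)) (T k))"
      apply (rule SUP_cong[OF refl])
      subgoal for k using psi1[of "Suc k"] by (simp add: numeral_2_eq_2)
      done
    also have "\<dots> = Suc ` (\<Union>k\<in>{1..n}. blk xs (T (k-1)) (T k))" by auto
    also have "(\<Union>k\<in>{1..n}. blk xs (T (k-1)) (T k)) = blk xs (T 0) (T n)"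
      by (rule blk_union) (simp add: balls_upto_Suc)
    also have "\<dots> = L" using blk_all[of xs] lx sx by simp
    finally show ?thesis .
  qed
  have U2: "(\<Union>j\<in>{1..n}. psi L (2, j)) = Suc ` C"
  proof -
    have "(\<Union>j\<in>{1..n}. psi L (2, j)) = (\<Union>k\<in>{1..n}. Suc ` blk ys (U (k-1)) (U k))"
      apply (rule SUP_cong[OF refl])
      subgoal for k using psi2[of k] by simp
      done
    also have "\<dots> = Suc ` (\<Union>k\<in>{1..n}. blk ys (U (k-1)) (U k))" by auto
    also have "(\<Union>k\<in>{1..n}. blk ys (U (k-1)) (U k)) = blk ys (U 0) (U n)"
      by (rule blk_union) (simp add: balls_upto_Suc)
    also have "\<dots> = C" using blk_all[of ys] ly sy by simp
    finally show ?thesis .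
  qed
  show "(\<Union>j\<in>{2..n+1}. psi L (1, j)) = Suc ` L" by (rule U1)
  show "psi L \<in> SVT [n + 1, n + 1] rho"
    unfolding SVT_def Let_def Nsum
  proof (intro CollectI conjI allI ballI impI)
    fix c assume "c \<notin> cells [n + 1, n + 1]"
    moreover obtain i j where "c = (i, j)" by (cases c)
    ultimately have "\<not> ((i = 1 \<or> i = 2) \<and> 1 \<le> j \<and> j \<le> n + 1)" "c = (i, j)" unfolding cells_eq by auto
    then show "psi L c = {}" by (auto simp: psi_def)
  next
    fix c assume c: "c \<in> cells [n + 1, n + 1]"
    then obtain i j where ij: "c = (i, j)" "i = 1 \<or> i = 2" "1 \<le> j" "j \<le> n + 1" unfolding cells_eq by auto
    have "finite (psi L c) \<and> card (psi L c) = rho c"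
    proof -
      consider "i = 1" "j = 1" | "i = 1" "2 \<le> j" | "i = 2" "j \<le> n" | "i = 2" "j = n + 1"
        using ij by linarith
      then show ?thesis
      proof cases
        case 1 then show ?thesis using ij psi11 by (simp add: rho_def)
      next
        case 2
        have "card (blk xs (T (j-2)) (T (j-1))) = T (j-1) - T (j-2)"
          by (rule blk_card[OF dx]) (use lx T_mono ij in auto)
        moreover have "T (j-1) = T (j-2) + t (j-1)"
        proof -
          have "j - 1 - 1 = j - 2" by simp
          moreover have "j - 1 \<in> {1..n}" using 2 ij by auto
          ultimately show ?thesis using T_step[of "j-1"] by simp
        qed
        ultimately show ?thesis using 2 ij psi1[of j]
          by (auto simp: rho_def card_image blk_def)
      next
        case 3
        have "card (blk ys (U (j-1)) (U j)) = U j - U (j-1)"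
          by (rule blk_card[OF dy]) (use ly U_mono 3 in auto)
        moreover have "U j = U (j-1) + (s j - t j)" using U_step[of j] 3 ij by auto
        ultimately show ?thesis using 3 ij psi2[of j] n1
          by (auto simp: rho_def card_image blk_def)
      qed (use psi2n ij in \<open>simp add: rho_def\<close>)
    qed
    then show "finite (psi L c)" "card (psi L c) = rho c" by auto
  next
    fix c d assume c: "c \<in> cells [n + 1, n + 1]" and d: "d \<in> cells [n + 1, n + 1]" and cd: "c \<noteq> d"
    obtain i j where ij: "c = (i, j)" "i = 1 \<or> i = 2" "1 \<le> j" "j \<le> n + 1" using c unfolding cells_eq by auto
    obtain i' j' where ij': "d = (i', j')" "i' = 1 \<or> i' = 2" "1 \<le> j'" "j' \<le> n + 1" using d unfolding cells_eq by auto
    show "psi L c \<inter> psi L d = {}"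
    proof (cases "i = i'")
      case True
      have "x \<noteq> y" if x: "x \<in> psi L (i, j)" and y: "y \<in> psi L (i, j')" for x y
      proof -
        have jj: "j < j' \<or> j' < j" using cd ij ij' True by auto
        show ?thesis
        proof (cases "i = 1")
          case i1: True
          show ?thesis using jj
          proof
            assume "j < j'" then show ?thesis using R1[of j j' x y] x y ij ij' i1 True by auto
          next
            assume "j' < j" then show ?thesis using R1[of j' j y x] x y ij ij' i1 True by auto
          qed
        next
          case i2: False
          then have i2: "i = 2" using ij by auto
          show ?thesis using jj
          proof
            assume "j < j'" then show ?thesis using R2[of j j' x y] x y ij ij' i2 True by auto
          next
            assume "j' < j" then show ?thesis using R2[of j' j y x] x y ij ij' i2 True by auto
          qed
        qed
      qed
      then show ?thesis using ij(1) ij'(1) True by blast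
    next
      case False
      have D: "insert 1 (Suc ` L) \<inter> insert (Sn + 2) (Suc ` C) = {}"
        using Lr Cr by force
      have "(i = 1 \<and> i' = 2) \<or> (i = 2 \<and> i' = 1)" using ij ij' False by auto
      then show ?thesis
      proof
        assume "i = 1 \<and> i' = 2"
        then show ?thesis using row1[of j] row2[of j'] ij ij' D by blast
      next
        assume "i = 2 \<and> i' = 1"
        then show ?thesis using row1[of j'] row2[of j] ij ij' D by blast
      qed
    qed
  next
    have "(\<Union>c\<in>cells [n + 1, n + 1]. psi L c) = (\<Union>j\<in>{1..n+1}. psi L (1, j)) \<union> (\<Union>j\<in>{1..n+1}. psi L (2, j))"
      unfolding cells_n by auto
    also have "(\<Union>j\<in>{1..n+1}. psi L (1, j)) = {1} \<union> Suc ` L"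
    proof -
      have "{1..n+1} = insert 1 {2..n+1}" using n1 by auto
      then show ?thesis using U1 psi11 by auto
    qed
    also have "(\<Union>j\<in>{1..n+1}. psi L (2, j)) = Suc ` C \<union> {Sn + 2}"
    proof -
      have "{1..n+1} = insert (n+1) {1..n}" by auto
      then show ?thesis using U2 psi2n by auto
    qed
    also have "{1} \<union> Suc ` L \<union> (Suc ` C \<union> {Sn + 2}) = {1..Sn + 2}"
    proof -
      have "L \<union> C = {1..Sn}" using LS by (auto simp: C_def)
      then have "Suc ` L \<union> Suc ` C = {2..Sn+1}" by (auto simp: image_Un[symmetric])
      then show ?thesis by auto
    qed
    finally show "(\<Union>c\<in>cells [n + 1, n + 1]. psi L c) = {1..Sn + 2}" .
  next
    fix i j x y
    assume h: "(i, j) \<in> cells [n + 1, n + 1] \<and> (i, Suc j) \<in> cells [n + 1, n + 1]"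
      and x: "x \<in> psi L (i, j)" and y: "y \<in> psi L (i, Suc j)"
    then show "x < y" using R1[of j "Suc j" x y] R2[of j "Suc j" x y] unfolding cells_eq by auto
  next
    fix i j x y
    assume h: "(i, j) \<in> cells [n + 1, n + 1] \<and> (Suc i, j) \<in> cells [n + 1, n + 1]"
      and x: "x \<in> psi L (i, j)" and y: "y \<in> psi L (Suc i, j)"
    then show "x < y" using Col[of j x y] unfolding cells_eq by (auto simp: numeral_2_eq_2)
  qed
qed

end

lemma cells_Suc: "cells [Suc m, Suc m] = {(i, j). (i = 1 \<or> i = 2) \<and> 1 \<le> j \<and> j \<le> Suc m}"
  using cells_eq[of m] by simp

context TB begin

lemma svt_facts:
  assumes "S \<in> SVT [n + 1, n + 1] rho"
  shows "\<And>c. c \<notin> cells [n + 1, n + 1] \<Longrightarrow> S c = {}"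
    and "\<And>c. c \<in> cells [n + 1, n + 1] \<Longrightarrow> finite (S c) \<and> card (S c) = rho c"
    and "\<And>c d. c \<in> cells [n + 1, n + 1] \<Longrightarrow> d \<in> cells [n + 1, n + 1] \<Longrightarrow> c \<noteq> d \<Longrightarrow> S c \<inter> S d = {}"
    and "(\<Union>c \<in> cells [n + 1, n + 1]. S c) = {1..Sn + 2}"
    and "\<And>i j x y. (i, j) \<in> cells [n + 1, n + 1] \<Longrightarrow> (i, Suc j) \<in> cells [n + 1, n + 1] \<Longrightarrow>
          x \<in> S (i, j) \<Longrightarrow> y \<in> S (i, Suc j) \<Longrightarrow> x < y"
    and "\<And>i j x y. (i, j) \<in> cells [n + 1, n + 1] \<Longrightarrow> (Suc i, j) \<in> cells [n + 1, n + 1] \<Longrightarrow>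
          x \<in> S (i, j) \<Longrightarrow> y \<in> S (Suc i, j) \<Longrightarrow> x < y"
proof -
  have h: "(\<forall>c. c \<notin> cells [n + 1, n + 1] \<longrightarrow> S c = {}) \<and>
          (\<forall>c \<in> cells [n + 1, n + 1]. finite (S c) \<and> card (S c) = rho c) \<and>
          (\<forall>c \<in> cells [n + 1, n + 1]. \<forall>d \<in> cells [n + 1, n + 1]. c \<noteq> d \<longrightarrow> S c \<inter> S d = {}) \<and>
          (\<Union>c \<in> cells [n + 1, n + 1]. S c) = {1..Sn + 2} \<and>
          (\<forall>i j. (i, j) \<in> cells [n + 1, n + 1] \<and> (i, Suc j) \<in> cells [n + 1, n + 1] \<longrightarrow>
                 (\<forall>x \<in> S (i, j). \<forall>y \<in> S (i, Suc j). x < y)) \<and>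
          (\<forall>i j. (i, j) \<in> cells [n + 1, n + 1] \<and> (Suc i, j) \<in> cells [n + 1, n + 1] \<longrightarrow>
                 (\<forall>x \<in> S (i, j). \<forall>y \<in> S (Suc i, j). x < y))"
    using assms unfolding SVT_def Let_def Nsum by (rule CollectD)
  note h1 = h[THEN conjunct1] and h2 = h[THEN conjunct2, THEN conjunct1]
    and h3 = h[THEN conjunct2, THEN conjunct2, THEN conjunct1]
    and h4 = h[THEN conjunct2, THEN conjunct2, THEN conjunct2, THEN conjunct1]
    and h5 = h[THEN conjunct2, THEN conjunct2, THEN conjunct2, THEN conjunct2, THEN conjunct1]
    and h6 = h[THEN conjunct2, THEN conjunct2, THEN conjunct2, THEN conjunct2, THEN conjunct2]
  show "\<And>c. c \<notin> cells [n + 1, n + 1] \<Longrightarrow> S c = {}" using h1 by blast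
  show "\<And>c. c \<in> cells [n + 1, n + 1] \<Longrightarrow> finite (S c) \<and> card (S c) = rho c" using h2 by blast
  show "\<And>c d. c \<in> cells [n + 1, n + 1] \<Longrightarrow> d \<in> cells [n + 1, n + 1] \<Longrightarrow> c \<noteq> d \<Longrightarrow> S c \<inter> S d = {}"
    using h3 by blast
  show "(\<Union>c \<in> cells [n + 1, n + 1]. S c) = {1..Sn + 2}" by (rule h4)
  show "\<And>i j x y. (i, j) \<in> cells [n + 1, n + 1] \<Longrightarrow> (i, Suc j) \<in> cells [n + 1, n + 1] \<Longrightarrow>
          x \<in> S (i, j) \<Longrightarrow> y \<in> S (i, Suc j) \<Longrightarrow> x < y" using h5 by blast
  show "\<And>i j x y. (i, j) \<in> cells [n + 1, n + 1] \<Longrightarrow> (Suc i, j) \<in> cells [n + 1, n + 1] \<Longrightarrow>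
          x \<in> S (i, j) \<Longrightarrow> y \<in> S (Suc i, j) \<Longrightarrow> x < y" using h6 by blast
qed

lemma psi_phi_inv:
  assumes g: "good s t n L"
  shows "phi (psi L) = L"
  using psi_props(2)[OF g] by (simp add: phi_def image_image)

lemma good_of_psi:
  assumes LS: "L \<subseteq> {1..Sn}" and cL: "card L = T n" and P: "psi L \<in> SVT [n + 1, n + 1] rho"
  shows "good s t n L"
  unfolding good_def
proof (intro conjI ballI)
  show "L \<subseteq> {1..Sn}" "card L = T n" by (fact LS, fact cL)
  fix k assume k: "k \<in> {1..n}"
  show "T k \<le> card (L \<inter> {1..balls_upto s k})"
  proof (cases "k = n")
    case True
    then have "L \<inter> {1..balls_upto s k} = L" using LS by auto
    then show ?thesis using cL True by simp
  next
    case False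
    then have kn: "k < n" using k by auto
    define C where "C = {1..Sn} - L"
    define xs where "xs = sorted_list_of_set L"
    define ys where "ys = sorted_list_of_set C"
    have fL: "finite L" using LS finite_subset by blast
    have fC: "finite C" by (simp add: C_def)
    have cC: "card C = U n" unfolding C_def using card_Diff_subset[OF fL LS] cL S_eq[of n] by simp
    have ssx: "sorted_wrt (<) xs" and sx: "set xs = L" and lx: "length xs = T n"
      using slos[OF fL] cL by (auto simp: xs_def)
    define a where "a = T k - 1"
    define b where "b = U k"
    have Tk: "T (k-1) < T k" using T_lt k by auto
    have Uk: "U k < U (k+1)" using U_lt[of "k+1"] kn by auto
    have Tkn: "T k \<le> T n" using T_mono kn by auto
    have Ukn: "U (k+1) \<le> U n" using U_mono kn by auto
    have a1: "a \<in> {T (Suc k - 2)..<T (Suc k - 1)}" using Tk by (auto simp: a_def numeral_2_eq_2)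
    have b1: "b \<in> {U (Suc k - 1)..<U (Suc k)}" using Uk by (auto simp: b_def)
    have xin: "Suc (xs ! a) \<in> psi L (1, Suc k)"
      using a1 kn k by (auto simp: psi_def xs_def blk_def)
    have yin: "Suc (ys ! b) \<in> psi L (2, Suc k)"
      using b1 kn k by (auto simp: psi_def ys_def C_def blk_def)
    have "Suc (xs ! a) < Suc (ys ! b)"
      by (rule svt_facts(6)[OF P, of 1 "Suc k"]) (use xin yin kn in \<open>auto simp: cells_Suc numeral_2_eq_2\<close>)
    then have lt: "xs ! a < ys ! b" by simp
    define m where "m = xs ! a"
    have aL: "a < card L" using Tk Tkn cL by (auto simp: a_def)
    have mL: "m \<in> L" using aL lx sx cL nth_mem[of a xs] by (auto simp: m_def)
    have c1: "T k \<le> card {y\<in>L. y \<le> m}"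
      using rank_lemma[OF fL aL, of m] Tk by (auto simp: m_def xs_def a_def)
    have c2: "card {y\<in>L. y \<le> m} \<le> T k"
    proof (cases "T k < card L")
      case True
      have "xs ! a < xs ! (T k)" by (rule ss_less[OF ssx]) (use True lx cL Tk in \<open>auto simp: a_def\<close>)
      then have "\<not> xs ! (T k) \<le> m" by (simp add: m_def)
      then show ?thesis using rank_lemma[OF fL True, of m] by (simp add: xs_def)
    next
      case False
      then have "card {y\<in>L. y \<le> m} \<le> card L" by (intro card_mono[OF fL]) auto
      then show ?thesis using False Tkn cL by linarith
    qed
    have bC: "b < card C" using Uk Ukn cC by (auto simp: b_def)
    have c3: "card {y\<in>C. y \<le> m} \<le> U k"
    proof -
      have "\<not> ys ! b \<le> m" using lt by (simp add: m_def)
      then show ?thesis using rank_lemma[OF fC bC, of m] by (simp add: ys_def b_def)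
    qed
    have split: "{1..m} = {y\<in>L. y \<le> m} \<union> {y\<in>C. y \<le> m}" using mL LS by (auto simp: C_def)
    have "m = card {1..m}" by simp
    also have "\<dots> \<le> card {y\<in>L. y \<le> m} + card {y\<in>C. y \<le> m}" unfolding split by (rule card_Un_le)
    finally have "m \<le> balls_upto s k" using c2 c3 S_eq[of k] kn by linarith
    then have "{y\<in>L. y \<le> m} \<subseteq> L \<inter> {1..balls_upto s k}" using LS by auto
    then have "card {y\<in>L. y \<le> m} \<le> card (L \<inter> {1..balls_upto s k})" by (intro card_mono) (use fL in auto)
    then show ?thesis using c1 by linarith
  qed
qed

end

context TB begin

lemma rho_pos: assumes "c \<in> cells [n + 1, n + 1]" shows "0 < rho c"
proof -
  obtain i j where ij: "c = (i, j)" "i = 1 \<or> i = 2" "1 \<le> j" "j \<le> n + 1"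
    using assms unfolding cells_eq by auto
  show ?thesis
  proof (cases "i = 1")
    case True
    show ?thesis
    proof (cases "j = 1")
      case False
      then have "j - 1 \<in> {1..n}" using ij by auto
      then show ?thesis using st ij True False by (auto simp: rho_def)
    qed (use ij True in \<open>auto simp: rho_def\<close>)
  next
    case False
    then show ?thesis using st ij by (auto simp: rho_def)
  qed
qed

lemma cellsI: "(i = 1 \<or> i = 2) \<Longrightarrow> 1 \<le> j \<Longrightarrow> j \<le> n + 1 \<Longrightarrow> (i, j) \<in> cells [n + 1, n + 1]"
  unfolding cells_eq by auto

lemma svt_struct:
  assumes P: "S \<in> SVT [n + 1, n + 1] rho"
  shows "phi S \<subseteq> {1..Sn} \<and> card (phi S) = T n \<and> psi (phi S) = S"
proof -
  note F0 = svt_facts(1)[OF P] and F1 = svt_facts(2)[OF P] and F2 = svt_facts(3)[OF P]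
    and F3 = svt_facts(4)[OF P] and F4 = svt_facts(5)[OF P] and F5 = svt_facts(6)[OF P]
  have ne: "S (i, j) \<noteq> {}" if "i = 1 \<or> i = 2" "1 \<le> j" "j \<le> n + 1" for i j
  proof -
    have c: "(i, j) \<in> cells [n + 1, n + 1]" using cellsI that by auto
    show ?thesis using F1[OF c] rho_pos[OF c] by auto
  qed
  have rng: "1 \<le> x \<and> x \<le> Sn + 2" if "x \<in> S (i, j)" "i = 1 \<or> i = 2" "1 \<le> j" "j \<le> n + 1" for x i j
  proof -
    have c: "(i, j) \<in> cells [n + 1, n + 1]" using cellsI that by auto
    have "x \<in> (\<Union>c \<in> cells [n + 1, n + 1]. S c)" using c that by auto
    then show ?thesis using F3 by auto
  qed
  have RowGen: "x < y" if h: "i = 1 \<or> i = 2" "1 \<le> j" "j < j'" "j' \<le> n + 1" "x \<in> S (i, j)" "y \<in> S (i, j')"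
    for i j j' x y
  proof -
    have "\<forall>y. j + Suc d \<le> n + 1 \<longrightarrow> y \<in> S (i, j + Suc d) \<longrightarrow> x < y" for d
    proof (induction d)
      case 0 show ?case
        using F4[of i j x] cellsI h by auto
    next
      case (Suc d)
      show ?case
      proof (intro allI impI)
        fix y assume y: "j + Suc (Suc d) \<le> n + 1" "y \<in> S (i, j + Suc (Suc d))"
        obtain z where z: "z \<in> S (i, j + Suc d)" using ne[of i "j + Suc d"] h y by auto
        have "x < z" using Suc y z by auto
        moreover have "z < y" using F4[of i "j + Suc d" z y] cellsI h y z by auto
        ultimately show "x < y" by simp
      qed
    qed
    from this[of "j' - j - 1"] h show ?thesis by auto
  qed
  have Col: "x < y" if "1 \<le> j" "j \<le> n + 1" "x \<in> S (1, j)" "y \<in> S (2, j)" for j x y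
    using F5[of 1 j x y] cellsI that by (auto simp: numeral_2_eq_2)
  have S11: "S (1, 1) = {1}"
  proof -
    have "1 \<in> (\<Union>c \<in> cells [n + 1, n + 1]. S c)" using F3 by auto
    then obtain i j where ij: "i = 1 \<or> i = 2" "1 \<le> j" "j \<le> n + 1" "1 \<in> S (i, j)"
      unfolding cells_eq by auto
    have "i = 1 \<and> j = 1"
    proof (rule ccontr)
      assume nn: "\<not> (i = 1 \<and> j = 1)"
      show False
      proof (cases "i = 1")
        case True
        then have "1 < j" using nn ij by auto
        obtain z where z: "z \<in> S (1, 1)" using ne[of 1 1] by auto
        have "z < 1" using RowGen[of 1 1 j z 1] z ij True \<open>1 < j\<close> by auto
        then show False using rng[of z 1 1] z by auto
      next
        case False
        then have i2: "i = 2" using ij by auto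
        obtain z where z: "z \<in> S (1, j)" using ne[of 1 j] ij by auto
        have "z < 1" using Col[of j z 1] z ij i2 by auto
        then show False using rng[of z 1 j] z ij by auto
      qed
    qed
    then have "1 \<in> S (1, 1)" using ij by auto
    moreover have "card (S (1, 1)) = 1" using F1[OF cellsI[of 1 1]] by (simp add: rho_def)
    ultimately show ?thesis by (metis card_1_singletonE singletonD)
  qed
  have S2n: "S (2, n + 1) = {Sn + 2}"
  proof -
    have "Sn + 2 \<in> (\<Union>c \<in> cells [n + 1, n + 1]. S c)" using F3 by auto
    then obtain i j where ij: "i = 1 \<or> i = 2" "1 \<le> j" "j \<le> n + 1" "Sn + 2 \<in> S (i, j)"
      unfolding cells_eq by auto
    have "i = 2 \<and> j = n + 1"
    proof (rule ccontr)
      assume nn: "\<not> (i = 2 \<and> j = n + 1)"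
      show False
      proof (cases "i = 2")
        case True
        then have "j < n + 1" using nn ij by auto
        obtain z where z: "z \<in> S (2, n + 1)" using ne[of 2 "n+1"] by auto
        have "Sn + 2 < z" using RowGen[of 2 j "n+1" "Sn + 2" z] z ij True \<open>j < n + 1\<close> by auto
        then show False using rng[of z 2 "n+1"] z by auto
      next
        case False
        then have i1: "i = 1" using ij by auto
        obtain z where z: "z \<in> S (2, j)" using ne[of 2 j] ij by auto
        have "Sn + 2 < z" using Col[of j "Sn + 2" z] z ij i1 by auto
        then show False using rng[of z 2 j] z ij by auto
      qed
    qed
    then have "Sn + 2 \<in> S (2, n + 1)" using ij by auto
    moreover have "card (S (2, n + 1)) = 1" using F1[OF cellsI[of 2 "n + 1"]] by (simp add: rho_def)
    ultimately show ?thesis by (metis card_1_singletonE singletonD)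
  qed
  have inner: "2 \<le> x \<and> x \<le> Sn + 1" if "x \<in> S (i, j)" "i = 1 \<or> i = 2" "1 \<le> j" "j \<le> n + 1"
      "(i, j) \<noteq> (1, 1)" "(i, j) \<noteq> (2, n + 1)" for x i j
  proof -
    have c: "(i, j) \<in> cells [n + 1, n + 1]" using cellsI that by auto
    have "x \<noteq> 1" using F2[OF c cellsI[of 1 1]] S11 that by auto
    moreover have "x \<noteq> Sn + 2" using F2[OF c cellsI[of 2 "n+1"]] S2n that by auto
    ultimately show ?thesis using rng[OF that(1-4)] by auto
  qed
  define B1 where "B1 k = (\<lambda>x. x - 1) ` S (1, Suc k)" for k
  define B2 where "B2 k = (\<lambda>x. x - 1) ` S (2, k)" for k
  define L where "L = phi S"
  have injS: "inj_on (\<lambda>x::nat. x - 1) (S (i, j))" if "i = 1 \<or> i = 2" "1 \<le> j" "j \<le> n + 1" for i j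
  proof (rule inj_onI)
    fix a b assume ab: "a \<in> S (i, j)" "b \<in> S (i, j)" "a - 1 = b - 1"
    have "1 \<le> a" "1 \<le> b" using rng[OF ab(1) that] rng[OF ab(2) that] by auto
    then show "a = b" using ab(3) by arith
  qed
  have LB: "L = (\<Union>k\<in>{1..n}. B1 k)"
  proof -
    have e: "{2..n+1} = Suc ` {1..n}" by (simp add: image_Suc_atLeastAtMost)
    show ?thesis unfolding L_def phi_def B1_def e image_image by auto
  qed
  have fB1: "finite (B1 k)" if "k \<in> {1..n}" for k
    using F1[OF cellsI[of 1 "Suc k"]] that by (auto simp: B1_def)
  have fB2: "finite (B2 k)" if "k \<in> {1..n}" for k
    using F1[OF cellsI[of 2 k]] that by (auto simp: B2_def)
  have cB1: "card (B1 k) = t k" if "k \<in> {1..n}" for k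
  proof -
    have "card (B1 k) = card (S (1, Suc k))" unfolding B1_def
      by (rule card_image) (rule injS, use that in auto)
    then show ?thesis using F1[OF cellsI[of 1 "Suc k"]] that by (auto simp: rho_def)
  qed
  have cB2: "card (B2 k) = s k - t k" if "k \<in> {1..n}" for k
  proof -
    have "card (B2 k) = card (S (2, k))" unfolding B2_def
      by (rule card_image) (rule injS, use that in auto)
    then show ?thesis using F1[OF cellsI[of 2 k]] that by (auto simp: rho_def)
  qed
  have oB1: "x < y" if h: "k \<in> {1..n}" "k' \<in> {1..n}" "k < k'" "x \<in> B1 k" "y \<in> B1 k'" for k k' x y
  proof -
    obtain a where a: "a \<in> S (1, Suc k)" "x = a - 1" using h by (auto simp: B1_def)
    obtain b where b: "b \<in> S (1, Suc k')" "y = b - 1" using h by (auto simp: B1_def)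
    have "a < b" using RowGen[of 1 "Suc k" "Suc k'" a b] a b h by auto
    moreover have "1 \<le> a" using rng[of a 1 "Suc k"] a h by auto
    ultimately show ?thesis using a b by auto
  qed
  have oB2: "x < y" if h: "k \<in> {1..n}" "k' \<in> {1..n}" "k < k'" "x \<in> B2 k" "y \<in> B2 k'" for k k' x y
  proof -
    obtain a where a: "a \<in> S (2, k)" "x = a - 1" using h by (auto simp: B2_def)
    obtain b where b: "b \<in> S (2, k')" "y = b - 1" using h by (auto simp: B2_def)
    have "a < b" using RowGen[of 2 k k' a b] a b h by auto
    moreover have "1 \<le> a" using rng[of a 2 k] a h by auto
    ultimately show ?thesis using a b by auto
  qed
  have cL: "card L = T n"
  proof -
    have "card (\<Union>k\<in>{1..n}. B1 k) = balls_upto (\<lambda>k. card (B1 k)) n"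
      by (rule card_UN_blocks[where B=B1 and n=n, OF fB1 oB1])
    also have "\<dots> = T n" by (rule balls_upto_cong) (use cB1 in auto)
    finally show ?thesis unfolding LB .
  qed
  have B1r: "x \<in> {1..Sn}" if h: "k \<in> {1..n}" "x \<in> B1 k" for k x
  proof -
    obtain a where a: "a \<in> S (1, Suc k)" "x = a - 1" using h by (auto simp: B1_def)
    have "2 \<le> a \<and> a \<le> Sn + 1" by (rule inner[OF a(1)]) (use h in auto)
    then show ?thesis using a by auto
  qed
  have B2r: "x \<in> {1..Sn}" if h: "k \<in> {1..n}" "x \<in> B2 k" for k x
  proof -
    obtain a where a: "a \<in> S (2, k)" "x = a - 1" using h by (auto simp: B2_def)
    have "2 \<le> a \<and> a \<le> Sn + 1" by (rule inner[OF a(1)]) (use h in auto)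
    then show ?thesis using a by auto
  qed
  have LS: "L \<subseteq> {1..Sn}" unfolding LB using B1r by blast
  define C' where "C' = (\<Union>k\<in>{1..n}. B2 k)"
  have CC: "{1..Sn} - L = C'"
  proof
    show "{1..Sn} - L \<subseteq> C'"
    proof
      fix y assume y: "y \<in> {1..Sn} - L"
      have "Suc y \<in> (\<Union>c \<in> cells [n + 1, n + 1]. S c)" using F3 y by auto
      then obtain i j where ij: "i = 1 \<or> i = 2" "1 \<le> j" "j \<le> n + 1" "Suc y \<in> S (i, j)"
        unfolding cells_eq by auto
      have n11: "(i, j) \<noteq> (1, 1)"
      proof
        assume "(i, j) = (1, 1)"
        then have "Suc y \<in> S (1, 1)" using ij(4) by simp
        then have "Suc y = 1" using S11 by simp
        then show False using y by simp
      qed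
      have n2n: "(i, j) \<noteq> (2, n + 1)"
      proof
        assume "(i, j) = (2, n + 1)"
        then have "Suc y \<in> S (2, n + 1)" using ij(4) by simp
        then have "Suc y = Sn + 2" using S2n by simp
        then show False using y by simp
      qed
      show "y \<in> C'"
      proof (cases "i = 1")
        case True
        then have "j - 1 \<in> {1..n}" "Suc (j - 1) = j" using ij n11 by auto
        then have "y \<in> B1 (j - 1)" using ij True unfolding B1_def by (intro image_eqI[where x="Suc y"]) auto
        then have "y \<in> L" unfolding LB using \<open>j - 1 \<in> {1..n}\<close> by auto
        then show ?thesis using y by auto
      next
        case False
        then have "i = 2" "j \<in> {1..n}" using ij n2n by auto
        then have "y \<in> B2 j" using ij unfolding B2_def by (intro image_eqI[where x="Suc y"]) auto
        then show ?thesis using \<open>j \<in> {1..n}\<close> by (auto simp: C'_def)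
      qed
    qed
    show "C' \<subseteq> {1..Sn} - L"
    proof
      fix y assume y: "y \<in> C'"
      then obtain k where k: "k \<in> {1..n}" "y \<in> B2 k" by (auto simp: C'_def)
      have "y \<notin> L"
      proof
        assume "y \<in> L"
        then obtain k' where k': "k' \<in> {1..n}" "y \<in> B1 k'" unfolding LB by auto
        obtain a where a: "a \<in> S (2, k)" "y = a - 1" using k by (auto simp: B2_def)
        obtain b where b: "b \<in> S (1, Suc k')" "y = b - 1" using k' by (auto simp: B1_def)
        have "1 \<le> a" "1 \<le> b" using rng[of a 2 k] rng[of b 1 "Suc k'"] a b k k' by auto
        then have "a = b" using a b by auto
        moreover have "S (2, k) \<inter> S (1, Suc k') = {}"
          by (rule F2[OF cellsI[of 2 k] cellsI[of 1 "Suc k'"]]) (use k k' in auto)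
        ultimately show False using a b by auto
      qed
      then show "y \<in> {1..Sn} - L" using B2r k by auto
    qed
  qed
  let ?xs = "sorted_list_of_set L" and ?ys = "sorted_list_of_set ({1..Sn} - L)"
  have G1: "B1 k = blk ?xs (T (k-1)) (T k)" if "k \<in> {1..n}" for k
  proof -
    have e: "balls_upto (\<lambda>k. card (B1 k)) m = T m" if "m \<le> n" for m
      by (rule balls_upto_cong) (use cB1 that in auto)
    have "B1 k = blk (sorted_list_of_set (\<Union>k\<in>{1..n}. B1 k))
        (balls_upto (\<lambda>k. card (B1 k)) (k-1)) (balls_upto (\<lambda>k. card (B1 k)) k)"
      apply (rule blocks_G)
        apply (rule fB1, assumption)
       apply (blast intro: oB1)
      apply (rule that)
      done
    moreover have "k - 1 \<le> n" "k \<le> n" using that by auto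
    ultimately show ?thesis using e[of k] e[of "k-1"] unfolding LB by simp
  qed
  have G2: "B2 k = blk ?ys (U (k-1)) (U k)" if "k \<in> {1..n}" for k
  proof -
    have e: "balls_upto (\<lambda>k. card (B2 k)) m = U m" if "m \<le> n" for m
      by (rule balls_upto_cong) (use cB2 that in auto)
    have "B2 k = blk (sorted_list_of_set (\<Union>k\<in>{1..n}. B2 k))
        (balls_upto (\<lambda>k. card (B2 k)) (k-1)) (balls_upto (\<lambda>k. card (B2 k)) k)"
      apply (rule blocks_G)
        apply (rule fB2, assumption)
       apply (blast intro: oB2)
      apply (rule that)
      done
    moreover have "k - 1 \<le> n" "k \<le> n" using that by auto
    ultimately show ?thesis using e[of k] e[of "k-1"] unfolding CC C'_def by simp
  qed
  have SucB: "Suc ` ((\<lambda>x. x - 1) ` S (i, j)) = S (i, j)" if "i = 1 \<or> i = 2" "1 \<le> j" "j \<le> n + 1" for i j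
  proof -
    have "\<forall>x\<in>S (i, j). 1 \<le> x" using rng that by blast
    then have "(\<lambda>x. Suc (x - 1)) ` S (i, j) = id ` S (i, j)" by (intro image_cong) auto
    then show ?thesis by (simp add: image_image)
  qed
  have "psi L = S"
  proof
    fix c
    obtain i j :: nat where c: "c = (i, j)" by (cases c)
    consider "i = 1" "j = 1" | "i = 1" "2 \<le> j" "j \<le> n + 1" | "i = 2" "1 \<le> j" "j \<le> n"
      | "i = 2" "j = n + 1" | "\<not> ((i = 1 \<or> i = 2) \<and> 1 \<le> j \<and> j \<le> n + 1)" by linarith
    then show "psi L c = S c"
    proof cases
      case 1 then show ?thesis using S11 c by (simp add: psi_def)
    next
      case 2
      then have k: "j - 1 \<in> {1..n}" "Suc (j - 1) = j" "j - 1 - 1 = j - 2" by auto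
      have "psi L c = Suc ` blk ?xs (T (j-2)) (T (j-1))" using 2 c by (simp add: psi_def)
      also have "\<dots> = Suc ` B1 (j - 1)" using G1[OF k(1)] k by simp
      also have "\<dots> = S (1, j)" unfolding B1_def k(2) using SucB[of 1 j] 2 by simp
      finally show ?thesis using 2 c by simp
    next
      case 3
      have "psi L c = Suc ` blk ?ys (U (j-1)) (U j)" using 3 c by (simp add: psi_def)
      also have "\<dots> = Suc ` B2 j" using G2[of j] 3 by simp
      also have "\<dots> = S (2, j)" unfolding B2_def using SucB[of 2 j] 3 by simp
      finally show ?thesis using 3 c by simp
    next
      case 4 then show ?thesis using S2n c n1 by (simp add: psi_def)
    next
      case 5
      then have "c \<notin> cells [n + 1, n + 1]" using c unfolding cells_eq by auto
      then show ?thesis using F0 5 c by (auto simp: psi_def)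
    qed
  qed
  then show ?thesis using LS cL by (simp add: L_def)
qed

end

context TB begin

lemma main: "tennis_count s t n = card (SVT [n + 1, n + 1] rho)"
proof -
  have "bij_betw phi (SVT [n + 1, n + 1] rho) {L. good s t n L}"
  proof (rule bij_betw_byWitness[where f'=psi])
    show "\<forall>S\<in>SVT [n + 1, n + 1] rho. psi (phi S) = S" using svt_struct by blast
    show "\<forall>L\<in>{L. good s t n L}. phi (psi L) = L" using psi_phi_inv by blast
    show "phi ` SVT [n + 1, n + 1] rho \<subseteq> {L. good s t n L}"
    proof
      fix L assume "L \<in> phi ` SVT [n + 1, n + 1] rho"
      then obtain S where S: "S \<in> SVT [n + 1, n + 1] rho" "L = phi S" by auto
      have "phi S \<subseteq> {1..Sn}" "card (phi S) = T n" "psi (phi S) = S" using svt_struct[OF S(1)] by auto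
      then show "L \<in> {L. good s t n L}" using good_of_psi[of "phi S"] S by auto
    qed
    show "psi ` {L. good s t n L} \<subseteq> SVT [n + 1, n + 1] rho" using psi_props(1) by blast
  qed
  then have "card (SVT [n + 1, n + 1] rho) = card {L. good s t n L}" by (rule bij_betw_same_card)
  then show ?thesis using tennis_count_good by simp
qed

end

theorem theorem5:
  fixes n :: nat and s t :: "nat \<Rightarrow> nat"
  assumes "n \<ge> 1"
    and "\<forall>i \<in> {1..n}. 0 < t i \<and> t i < s i"
  shows "tennis_count s t n =
         card (SVT [n + 1, n + 1]
           (\<lambda>(i, j). if i = 1 then (if j = 1 then 1 else t (j - 1))
                     else (if j = n + 1 then 1 else s j - t j)))"
proof -
  interpret TB s t n using assms by unfold_locales auto
  show ?thesis using main unfolding rho_def .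
qed

end
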